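(* Let $X$ and $Y$ be real Banach spaces and let $Z$ be a metric linear space (topological vector space) equipped with a translation-invariant metric $d_Z$. Suppose $X$ and $Y$ are linearly and isometrically embedded into $Z$ (so $d_Z(x_1,x_2)=\|x_1-x_2\|_X$ on $X$ and similarly on $Y$). Then $d_K(X,Y)\le d_Z(B_X,B_Y)$, where $d_Z(B_X,B_Y)$ is the Hausdorff distance in $(Z,d_Z)$ between the closed unit balls.
   Context: The Kadets distance $d_K(X,Y)$ is the infimum, over all Banach spaces $W$ and linear isometric embeddings $U:X\to W$, $V:Y\to W$, of the Hausdorff distance in $W$ between $UB_X$ and $VB_Y$. *)

theory Defs
  imports "HOL-Analysis.Analysis" "HOL-Library.Function_Algebras"
begin

instantiation "fun" :: (type, real_vector) real_vector
begin
definition scaleR_fun :: "real \<Rightarrow> ('a \<Rightarrow> 'b) \<Rightarrow> 'a \<Rightarrow> 'b" where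
  "scaleR_fun c f = (\<lambda>x. c *\<^sub>R f x)"
instance by standard (auto simp: scaleR_fun_def fun_eq_iff scaleR_add_right scaleR_add_left)
end

definition hausdorff_dist :: "('w \<Rightarrow> 'w \<Rightarrow> real) \<Rightarrow> 'w set \<Rightarrow> 'w set \<Rightarrow> real" where
  "hausdorff_dist d A B =
     max (SUP a\<in>A. INF b\<in>B. d a b) (SUP b\<in>B. INF a\<in>A. d a b)"

definition banach_on :: "'v::real_vector set \<Rightarrow> ('v \<Rightarrow> real) \<Rightarrow> bool" where
  "banach_on S N \<longleftrightarrow>
     subspace S \<and>
     (\<forall>x\<in>S. 0 \<le> N x) \<and>
     (\<forall>x\<in>S. N x = 0 \<longleftrightarrow> x = 0) \<and>
     (\<forall>c. \<forall>x\<in>S. N (c *\<^sub>R x) = \<bar>c\<bar> * N x) \<and>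
     (\<forall>x\<in>S. \<forall>y\<in>S. N (x + y) \<le> N x + N y) \<and>
     (\<forall>s. (\<forall>n. s n \<in> S) \<and> (\<forall>e>0. \<exists>M. \<forall>m\<ge>M. \<forall>n\<ge>M. N (s m - s n) < e)
          \<longrightarrow> (\<exists>l\<in>S. (\<lambda>n. N (s n - l)) \<longlonglongrightarrow> 0))"

text \<open>The ambient Banach space W ranges over all Banach spaces realised as
  subspaces of the real vector space of functions on the index type nat => 'a * 'b; every
  Banach space of Hamel dimension at most |nat => 'a * 'b| is (linearly isometrically) of
  this form, and this covers the closed span of U X + V Y for any W, U, V.\<close>
definition kadets_dist :: "'a::banach itself \<Rightarrow> 'b::banach itself \<Rightarrow> real" where
  "kadets_dist _ _ = Inf {hausdorff_dist (\<lambda>u v. N (u - v)) (U ` cball 0 1) (V ` cball 0 1) |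
      (S :: ((nat \<Rightarrow> 'a \<times> 'b) \<Rightarrow> real) set) N (U :: 'a \<Rightarrow> ((nat \<Rightarrow> 'a \<times> 'b) \<Rightarrow> real))
      (V :: 'b \<Rightarrow> ((nat \<Rightarrow> 'a \<times> 'b) \<Rightarrow> real)).
      banach_on S N \<and> linear U \<and> linear V \<and> range U \<subseteq> S \<and> range V \<subseteq> S \<and>
      (\<forall>x. N (U x) = norm x) \<and> (\<forall>y. N (V y) = norm y)}"

end

theory Submission
  imports Defs
begin


lemma exists_embed:
  "\<exists>E :: 'v::real_vector \<Rightarrow> ((nat \<Rightarrow> 'v) \<Rightarrow> real). linear E \<and> inj E"
proof -
  define B :: "'v set" where "B = extend_basis {}"
  have indB: "independent B" unfolding B_def
    by (simp add: real_vector.independent_extend_basis[OF real_vector.independent_empty])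
  have spB: "\<And>v. v \<in> span B" unfolding B_def
    by (simp add: real_vector.span_extend_basis[OF real_vector.independent_empty])
  define E :: "'v \<Rightarrow> ((nat \<Rightarrow> 'v) \<Rightarrow> real)" where
    "E v = (\<lambda>t. representation B v (t 0))" for v
  have "linear E"
  proof (rule linearI)
    fix x y show "E (x + y) = E x + E y"
      unfolding E_def by (simp add: real_vector.representation_add[OF indB spB spB] plus_fun_def)
  next
    fix c x show "E (c *\<^sub>R x) = c *\<^sub>R E x"
      unfolding E_def by (simp add: real_vector.representation_scale[OF indB spB] scaleR_fun_def)
  qed
  moreover have "inj E"
  proof (rule injI)
    fix x y assume "E x = E y"
    have "\<And>b. representation B x b = representation B y b"
    proof -
      fix b
      have "E x (\<lambda>_. b) = E y (\<lambda>_. b)" using \<open>E x = E y\<close> by simp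
      then show "representation B x b = representation B y b" by (simp add: E_def)
    qed
    then have "representation B x = representation B y" by auto
    then show "x = y"
      by (metis real_vector.sum_nonzero_representation_eq[OF indB spB])
  qed
  ultimately show ?thesis by blast
qed



lemma banach_transfer:
  fixes E :: "'v::real_vector \<Rightarrow> 'w::real_vector" and Nv :: "'v \<Rightarrow> real"
  assumes linE: "linear E" and injE: "inj E"
    and nonneg: "\<And>x. 0 \<le> Nv x" and defi: "\<And>x. Nv x = 0 \<longleftrightarrow> x = 0"
    and hom: "\<And>c x. Nv (c *\<^sub>R x) = \<bar>c\<bar> * Nv x"
    and tri: "\<And>x y. Nv (x + y) \<le> Nv x + Nv y"
    and compl: "\<And>s. (\<forall>e>0. \<exists>M. \<forall>m\<ge>M. \<forall>n\<ge>M. Nv (s m - s n) < e) \<Longrightarrow> (\<exists>l. (\<lambda>n. Nv (s n - l)) \<longlonglongrightarrow> 0)"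
  shows "banach_on (range E) (\<lambda>w. Nv (inv E w))"
proof -
  have iv: "\<And>x. inv E (E x) = x" using injE by simp
  have sub: "subspace (range E)"
    using real_vector.linear_subspace_image[OF linE real_vector.subspace_UNIV] .
  have c1: "\<forall>x\<in>range E. 0 \<le> Nv (inv E x)" using nonneg by auto
  have c2: "\<forall>x\<in>range E. Nv (inv E x) = 0 \<longleftrightarrow> x = 0"
  proof
    fix w assume "w \<in> range E" then obtain x where w: "w = E x" by auto
    show "Nv (inv E w) = 0 \<longleftrightarrow> w = 0"
      using defi[of x] injE linear_0[OF linE] unfolding w iv by (metis injD)
  qed
  have c3: "\<forall>c. \<forall>x\<in>range E. Nv (inv E (c *\<^sub>R x)) = \<bar>c\<bar> * Nv (inv E x)"
  proof (intro allI ballI)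
    fix c w assume "w \<in> range E" then obtain x where w: "w = E x" by auto
    show "Nv (inv E (c *\<^sub>R w)) = \<bar>c\<bar> * Nv (inv E w)"
      unfolding w linear_scale[OF linE, symmetric] iv by (rule hom)
  qed
  have c4: "\<forall>x\<in>range E. \<forall>y\<in>range E. Nv (inv E (x + y)) \<le> Nv (inv E x) + Nv (inv E y)"
  proof (intro ballI)
    fix w w' assume "w \<in> range E" "w' \<in> range E"
    then obtain x x' where w: "w = E x" "w' = E x'" by auto
    show "Nv (inv E (w + w')) \<le> Nv (inv E w) + Nv (inv E w')"
      unfolding w linear_add[OF linE, symmetric] iv by (rule tri)
  qed
  have c5: "\<forall>s. (\<forall>n. s n \<in> range E) \<and> (\<forall>e>0. \<exists>M. \<forall>m\<ge>M. \<forall>n\<ge>M. Nv (inv E (s m - s n)) < e)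
          \<longrightarrow> (\<exists>l\<in>range E. (\<lambda>n. Nv (inv E (s n - l))) \<longlonglongrightarrow> 0)"
  proof (intro allI impI)
    fix s :: "nat \<Rightarrow> 'w" assume as: "(\<forall>n. s n \<in> range E) \<and> (\<forall>e>0. \<exists>M. \<forall>m\<ge>M. \<forall>n\<ge>M. Nv (inv E (s m - s n)) < e)"
    define v :: "nat \<Rightarrow> 'v" where "v n = inv E (s n)" for n
    have sv: "s n = E (v n)" for n unfolding v_def using as by (simp add: f_inv_into_f)
    have "\<forall>e>0. \<exists>M. \<forall>m\<ge>M. \<forall>n\<ge>M. Nv (v m - v n) < e"
      using as unfolding sv linear_diff[OF linE, symmetric] iv by blast
    then obtain l where l: "(\<lambda>n. Nv (v n - l)) \<longlonglongrightarrow> 0" using compl by blast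
    have "(\<lambda>n. Nv (inv E (s n - E l))) \<longlonglongrightarrow> 0"
      unfolding sv linear_diff[OF linE, symmetric] iv by (rule l)
    then show "\<exists>l\<in>range E. (\<lambda>n. Nv (inv E (s n - l))) \<longlonglongrightarrow> 0" by blast
  qed
  show ?thesis unfolding banach_on_def using sub c1 c2 c3 c4 c5 by blast
qed



definition pz :: "'z::{real_vector,metric_space} \<Rightarrow> real" where "pz z = dist z 0"
definition qz :: "'z::{real_vector,metric_space} \<Rightarrow> real" where
  "qz z = (INF n\<in>{Suc 0..}. pz (real n *\<^sub>R z) / real n)"

locale TI =
  assumes ti: "\<forall>x y z::'z::{real_vector,metric_space}. dist (x + z) (y + z) = dist x y"
begin

lemma pz_nonneg: "0 \<le> pz (z::'z)" by (simp add: pz_def)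
lemma pz_zero: "pz (0::'z) = 0" by (simp add: pz_def)

lemma pz_add: "pz ((a::'z) + b) \<le> pz a + pz b"
proof -
  have "dist (a + b) 0 \<le> dist (a + b) b + dist b 0" by (rule dist_triangle)
  also have "dist (a + b) b = dist a 0" using ti by (metis add_0)
  finally show ?thesis by (simp add: pz_def)
qed

lemma pz_neg: "pz (- (a::'z)) = pz a"
proof -
  have "dist (- a + a) (0 + a) = dist (- a) 0" using ti by blast
  then show ?thesis by (simp add: pz_def dist_commute)
qed

lemma pz_diff: "pz ((a::'z) - b) = dist a b"
proof -
  have "dist (a - b + b) (0 + b) = dist (a - b) 0" using ti by blast
  then show ?thesis by (simp add: pz_def)
qed

lemma pz_nat: "pz (real k *\<^sub>R (a::'z)) \<le> real k * pz a"
proof (induction k)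
  case 0 then show ?case by (simp add: pz_zero)
next
  case (Suc k)
  have "pz (real (Suc k) *\<^sub>R a) = pz (a + real k *\<^sub>R a)" by (simp add: algebra_simps)
  also have "\<dots> \<le> pz a + pz (real k *\<^sub>R a)" by (rule pz_add)
  also have "\<dots> \<le> real (Suc k) * pz a" using Suc by (simp add: algebra_simps)
  finally show ?case .
qed

lemma qz_le: "n \<ge> 1 \<Longrightarrow> qz (z::'z) \<le> pz (real n *\<^sub>R z) / real n"
  unfolding qz_def
  by (rule cINF_lower) (auto intro!: bdd_belowI[where m=0] simp: pz_nonneg)

lemma qz_ge: "(\<And>n. n \<ge> 1 \<Longrightarrow> c \<le> pz (real n *\<^sub>R (z::'z)) / real n) \<Longrightarrow> c \<le> qz z"
  unfolding qz_def by (rule cINF_greatest) auto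

lemma qz_nonneg: "0 \<le> qz (z::'z)"
  by (rule qz_ge) (simp add: pz_nonneg)

lemma qz_le_pz: "qz (z::'z) \<le> pz z"
  using qz_le[of 1 z] by simp

lemma qz_zero: "qz (0::'z) = 0"
  using qz_le_pz[of 0] qz_nonneg[of 0] by (simp add: pz_zero)

lemma qz_add: "qz ((a::'z) + b) \<le> qz a + qz b"
proof -
  have key: "qz (a + b) \<le> pz (real n *\<^sub>R a) / real n + pz (real m *\<^sub>R b) / real m"
    if n: "n \<ge> 1" and m: "m \<ge> 1" for n m
  proof -
    have nm: "real (n * m) > 0" using n m by simp
    have "qz (a + b) \<le> pz (real (n*m) *\<^sub>R (a + b)) / real (n*m)" using n m by (intro qz_le) simp
    also have "pz (real (n*m) *\<^sub>R (a + b)) \<le> pz (real (n*m) *\<^sub>R a) + pz (real (n*m) *\<^sub>R b)"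
      using pz_add by (simp add: scaleR_add_right)
    also have "pz (real (n*m) *\<^sub>R a) = pz (real m *\<^sub>R (real n *\<^sub>R a))" by (simp add: mult.commute)
    also have "\<dots> \<le> real m * pz (real n *\<^sub>R a)" by (rule pz_nat)
    also have "pz (real (n*m) *\<^sub>R b) = pz (real n *\<^sub>R (real m *\<^sub>R b))" by simp
    also have "\<dots> \<le> real n * pz (real m *\<^sub>R b)" by (rule pz_nat)
    finally have "qz (a + b) \<le> (real m * pz (real n *\<^sub>R a) + real n * pz (real m *\<^sub>R b)) / real (n * m)"
      using nm by (simp add: divide_right_mono)
    also have "\<dots> = pz (real n *\<^sub>R a) / real n + pz (real m *\<^sub>R b) / real m"
      using n m by (simp add: field_simps)
    finally show ?thesis .
  qed
  have "qz (a + b) - qz a \<le> pz (real m *\<^sub>R b) / real m" if m: "m \<ge> 1" for m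
  proof -
    have "qz (a + b) - pz (real m *\<^sub>R b) / real m \<le> qz a"
      by (rule qz_ge) (use key m in fastforce)
    then show ?thesis by simp
  qed
  then have "qz (a + b) - qz a \<le> qz b" by (rule qz_ge)
  then show ?thesis by simp
qed

lemma qz_neg: "qz (- (z::'z)) = qz z"
  unfolding qz_def by (simp add: pz_neg[of "real _ *\<^sub>R z", symmetric])

lemma qz_mult: "k \<ge> 1 \<Longrightarrow> qz (real k *\<^sub>R (z::'z)) = real k * qz z"
proof (rule antisym)
  assume k: "k \<ge> 1"
  have "qz (real k *\<^sub>R z) / real k \<le> qz z"
  proof (rule qz_ge)
    fix n :: nat assume n: "n \<ge> 1"
    have "qz (real k *\<^sub>R z) \<le> pz (real n *\<^sub>R (real k *\<^sub>R z)) / real n" using n by (rule qz_le)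
    also have "pz (real n *\<^sub>R (real k *\<^sub>R z)) = pz (real k *\<^sub>R (real n *\<^sub>R z))" by (simp add: mult.commute)
    also have "\<dots> \<le> real k * pz (real n *\<^sub>R z)" by (rule pz_nat)
    finally have "qz (real k *\<^sub>R z) \<le> real k * pz (real n *\<^sub>R z) / real n"
      using n by (simp add: divide_right_mono)
    then show "qz (real k *\<^sub>R z) / real k \<le> pz (real n *\<^sub>R z) / real n"
      using k n by (simp add: field_simps)
  qed
  then show "qz (real k *\<^sub>R z) \<le> real k * qz z" using k by (simp add: field_simps)
next
  assume k: "k \<ge> 1"
  show "real k * qz z \<le> qz (real k *\<^sub>R z)"
  proof (rule qz_ge)
    fix n :: nat assume n: "n \<ge> 1"
    have "qz z \<le> pz (real (n * k) *\<^sub>R z) / real (n * k)" using n k by (intro qz_le) simp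
    then have "real k * qz z \<le> real k * (pz (real (n * k) *\<^sub>R z) / real (n * k))"
      by (rule mult_left_mono) simp
    also have "real k * (pz (real (n * k) *\<^sub>R z) / real (n * k)) = pz (real (n * k) *\<^sub>R z) / real n"
      using n k by (simp add: field_simps)
    also have "real (n * k) *\<^sub>R z = real n *\<^sub>R (real k *\<^sub>R z)" by simp
    finally show "real k * qz z \<le> pz (real n *\<^sub>R (real k *\<^sub>R z)) / real n" .
  qed
qed

end


locale setting = TI +
  fixes f :: "'a::banach \<Rightarrow> 'z::{real_vector,metric_space}" and g :: "'b::banach \<Rightarrow> 'z"
  assumes lin_f: "linear f" and lin_g: "linear g"
    and iso_f: "\<forall>x1 x2. dist (f x1) (f x2) = norm (x1 - x2)"
    and iso_g: "\<forall>y1 y2. dist (g y1) (g y2) = norm (y1 - y2)"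
begin

definition Fv :: "'a \<times> 'b \<Rightarrow> 'z" where "Fv v = f (fst v) + g (snd v)"
definition Q :: "'a \<times> 'b \<Rightarrow> real" where "Q v = qz (Fv v)"

lemma Fv_add: "Fv (v + w) = Fv v + Fv w"
  unfolding Fv_def by (simp add: linear_add[OF lin_f] linear_add[OF lin_g] algebra_simps)

lemma Fv_scale: "Fv (c *\<^sub>R v) = c *\<^sub>R Fv v"
  unfolding Fv_def by (simp add: linear_scale[OF lin_f] linear_scale[OF lin_g] algebra_simps)

lemma Fv_neg: "Fv (- v) = - Fv v"
  unfolding Fv_def by (simp add: linear_neg[OF lin_f] linear_neg[OF lin_g] algebra_simps)

lemma Fv_diff: "Fv (v - w) = Fv v - Fv w"
  unfolding Fv_def by (simp add: linear_diff[OF lin_f] linear_diff[OF lin_g] algebra_simps)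

lemma pzf: "pz (f x) = norm x"
proof -
  have "dist (f x) (f 0) = norm (x - 0)" using iso_f by blast
  then show ?thesis by (simp add: pz_def linear_0[OF lin_f])
qed

lemma pzg: "pz (g y) = norm y"
proof -
  have "dist (g y) (g 0) = norm (y - 0)" using iso_g by blast
  then show ?thesis by (simp add: pz_def linear_0[OF lin_g])
qed

lemma Q_nonneg: "0 \<le> Q v" unfolding Q_def by (rule qz_nonneg)

lemma Q_le: "Q v \<le> norm (fst v) + norm (snd v)"
proof -
  have "Q v \<le> pz (Fv v)" unfolding Q_def by (rule qz_le_pz)
  also have "\<dots> \<le> pz (f (fst v)) + pz (g (snd v))" unfolding Fv_def by (rule pz_add)
  finally show ?thesis by (simp add: pzf pzg)
qed

lemma Q_add: "Q (v + w) \<le> Q v + Q w"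
  unfolding Q_def Fv_add by (rule qz_add)

lemma Q_neg: "Q (- v) = Q v"
  unfolding Q_def Fv_neg by (rule qz_neg)

lemma Q_zero: "Q 0 = 0"
  unfolding Q_def using Fv_scale[of 0 0] by (simp add: qz_zero)

lemma Q_fst: "Q (x, 0) = norm x"
proof (rule antisym)
  show "Q (x, 0) \<le> norm x" using Q_le[of "(x,0)"] by simp
  show "norm x \<le> Q (x, 0)" unfolding Q_def
  proof (rule qz_ge)
    fix n :: nat assume n: "n \<ge> 1"
    have "Fv (x, 0) = f x" unfolding Fv_def using linear_0[OF lin_g] by simp
    then have "pz (real n *\<^sub>R Fv (x, 0)) = norm (real n *\<^sub>R x)"
      by (simp add: linear_scale[OF lin_f, symmetric] pzf)
    then show "norm x \<le> pz (real n *\<^sub>R Fv (x, 0)) / real n" using n by simp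
  qed
qed

lemma Q_snd: "Q (0, y) = norm y"
proof (rule antisym)
  show "Q (0, y) \<le> norm y" using Q_le[of "(0,y)"] by simp
  show "norm y \<le> Q (0, y)" unfolding Q_def
  proof (rule qz_ge)
    fix n :: nat assume n: "n \<ge> 1"
    have "Fv (0, y) = g y" unfolding Fv_def using linear_0[OF lin_f] by simp
    then have "pz (real n *\<^sub>R Fv (0, y)) = norm (real n *\<^sub>R y)"
      by (simp add: linear_scale[OF lin_g, symmetric] pzg)
    then show "norm y \<le> pz (real n *\<^sub>R Fv (0, y)) / real n" using n by simp
  qed
qed

lemma Q_nat: "Q (real k *\<^sub>R v) = real k * Q v"
proof (cases "k = 0")
  case True then show ?thesis by (simp add: Q_zero)
next
  case False then show ?thesis unfolding Q_def Fv_scale by (intro qz_mult) simp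
qed

lemma Q_int: "Q (of_int i *\<^sub>R v) = \<bar>of_int i\<bar> * Q v"
proof (cases "i \<ge> 0")
  case True
  then have e: "(of_int i :: real) = real (nat i)" by simp
  have "Q (real (nat i) *\<^sub>R v) = real (nat i) * Q v" by (rule Q_nat)
  then show ?thesis unfolding e by simp
next
  case False
  then have e: "(of_int i :: real) = - real (nat (- i))" by simp
  have "Q (real (nat (-i)) *\<^sub>R v) = real (nat (-i)) * Q v" by (rule Q_nat)
  moreover have "Q ((- real (nat (- i))) *\<^sub>R v) = Q (real (nat (-i)) *\<^sub>R v)"
    using Q_neg[of "real (nat (-i)) *\<^sub>R v"] by simp
  ultimately show ?thesis unfolding e by simp
qed

lemma Q_rat: "r \<in> \<rat> \<Longrightarrow> Q (r *\<^sub>R v) = \<bar>r\<bar> * Q v"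
proof -
  assume "r \<in> \<rat>"
  then obtain i n where r: "r = real_of_int i / real n" and n: "n \<noteq> 0"
    unfolding Rats_eq_int_div_nat by blast
  have nr: "real n * r = of_int i" using n unfolding r by simp
  have "real n * Q (r *\<^sub>R v) = Q (real n *\<^sub>R (r *\<^sub>R v))" by (simp only: Q_nat)
  also have "real n *\<^sub>R (r *\<^sub>R v) = of_int i *\<^sub>R v" by (simp only: scaleR_scaleR nr)
  also have "Q \<dots> = \<bar>of_int i\<bar> * Q v" by (rule Q_int)
  also have "\<bar>of_int i\<bar> = real n * \<bar>r\<bar>" unfolding nr[symmetric] by (simp add: abs_mult)
  finally have "real n * Q (r *\<^sub>R v) = real n * (\<bar>r\<bar> * Q v)" by simp
  then show ?thesis using n by simp
qed

lemma Q_lip: "\<bar>Q v - Q w\<bar> \<le> Q (v - w)"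
proof -
  have "Q v \<le> Q w + Q (v - w)" using Q_add[of w "v - w"] by simp
  moreover have "Q w \<le> Q v + Q (w - v)" using Q_add[of v "w - v"] by simp
  moreover have "Q (w - v) = Q (v - w)" using Q_neg[of "v - w"] by simp
  ultimately show ?thesis by linarith
qed

lemma Q_hom: "Q (c *\<^sub>R v) = \<bar>c\<bar> * Q v"
proof -
  define K where "K = norm (fst v) + norm (snd v) + Q v"
  have K: "K \<ge> 0" unfolding K_def using Q_nonneg[of v] by simp
  have bound: "\<bar>Q (c *\<^sub>R v) - \<bar>c\<bar> * Q v\<bar> \<le> e * K" if e: "e > 0" for e
  proof -
    obtain r where r: "r \<in> \<rat>" "c < r" "r < c + e" using Rats_dense_in_real[of c "c + e"] e by auto
    have d: "\<bar>c - r\<bar> \<le> e" using r by simp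
    have "\<bar>Q (c *\<^sub>R v) - Q (r *\<^sub>R v)\<bar> \<le> Q (c *\<^sub>R v - r *\<^sub>R v)" by (rule Q_lip)
    also have "c *\<^sub>R v - r *\<^sub>R v = (c - r) *\<^sub>R v" by (simp add: algebra_simps)
    also have "Q \<dots> \<le> norm (fst ((c - r) *\<^sub>R v)) + norm (snd ((c - r) *\<^sub>R v))" by (rule Q_le)
    also have "\<dots> = \<bar>c - r\<bar> * (norm (fst v) + norm (snd v))" by (simp add: distrib_left)
    finally have 1: "\<bar>Q (c *\<^sub>R v) - Q (r *\<^sub>R v)\<bar> \<le> \<bar>c - r\<bar> * (norm (fst v) + norm (snd v))" .
    have 2: "\<bar>\<bar>r\<bar> * Q v - \<bar>c\<bar> * Q v\<bar> \<le> \<bar>c - r\<bar> * Q v"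
    proof -
      have "\<bar>\<bar>r\<bar> * Q v - \<bar>c\<bar> * Q v\<bar> = \<bar>\<bar>r\<bar> - \<bar>c\<bar>\<bar> * Q v"
        using Q_nonneg[of v] by (simp add: abs_mult left_diff_distrib[symmetric])
      also have "\<dots> \<le> \<bar>c - r\<bar> * Q v" using Q_nonneg[of v] by (intro mult_right_mono) auto
      finally show ?thesis .
    qed
    have "\<bar>Q (c *\<^sub>R v) - \<bar>c\<bar> * Q v\<bar> \<le> \<bar>c - r\<bar> * (norm (fst v) + norm (snd v)) + \<bar>c - r\<bar> * Q v"
      using 1 2 Q_rat[OF r(1), of v] by linarith
    also have "\<dots> = \<bar>c - r\<bar> * K" unfolding K_def by (simp add: algebra_simps)
    also have "\<dots> \<le> e * K" using d K by (intro mult_right_mono) auto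
    finally show ?thesis .
  qed
  have "\<bar>Q (c *\<^sub>R v) - \<bar>c\<bar> * Q v\<bar> = 0"
  proof (rule ccontr)
    define a where "a = \<bar>Q (c *\<^sub>R v) - \<bar>c\<bar> * Q v\<bar>"
    assume "\<bar>Q (c *\<^sub>R v) - \<bar>c\<bar> * Q v\<bar> \<noteq> 0"
    then have a: "a > 0" unfolding a_def by simp
    have "a / (K + 1) > 0" using a K by simp
    then have "a \<le> (a / (K + 1)) * K" unfolding a_def by (rule bound)
    also have "\<dots> < a" using a K by (simp add: field_simps)
    finally show False by simp
  qed
  then show ?thesis by simp
qed


definition Nn :: "real \<Rightarrow> 'a \<times> 'b \<Rightarrow> real" where
  "Nn \<epsilon> v = max (Q v) (\<epsilon> * max (norm (fst v)) (norm (snd v)))"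

context
  fixes \<epsilon> :: real
  assumes eps: "0 < \<epsilon>" "\<epsilon> \<le> 1"
begin

lemma Nn_nonneg: "0 \<le> Nn \<epsilon> v"
  unfolding Nn_def using Q_nonneg[of v] by simp

lemma Nn_lower: "\<epsilon> * norm (fst v) \<le> Nn \<epsilon> v" "\<epsilon> * norm (snd v) \<le> Nn \<epsilon> v"
  unfolding Nn_def using eps by (auto intro!: mult_left_mono simp: le_max_iff_disj)

lemma Nn_upper: "Nn \<epsilon> v \<le> norm (fst v) + norm (snd v)"
proof -
  have "\<epsilon> * max (norm (fst v)) (norm (snd v)) \<le> 1 * max (norm (fst v)) (norm (snd v))"
    using eps by (intro mult_right_mono) (auto simp: le_max_iff_disj)
  also have "\<dots> \<le> norm (fst v) + norm (snd v)" by simp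
  finally show ?thesis unfolding Nn_def using Q_le[of v] by simp
qed

lemma Nn_zero_iff: "Nn \<epsilon> v = 0 \<longleftrightarrow> v = 0"
proof
  assume "Nn \<epsilon> v = 0"
  then have "\<epsilon> * norm (fst v) \<le> 0" "\<epsilon> * norm (snd v) \<le> 0" using Nn_lower[of v] by auto
  then have "norm (fst v) \<le> 0" "norm (snd v) \<le> 0" using eps by (simp_all add: mult_le_0_iff)
  then show "v = 0" by (simp add: prod_eq_iff)
next
  assume "v = 0" then show "Nn \<epsilon> v = 0" unfolding Nn_def using Q_zero eps by simp
qed

lemma Nn_hom: "Nn \<epsilon> (c *\<^sub>R v) = \<bar>c\<bar> * Nn \<epsilon> v"
proof -
  have "max (norm (fst (c *\<^sub>R v))) (norm (snd (c *\<^sub>R v))) = \<bar>c\<bar> * max (norm (fst v)) (norm (snd v))"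
    by (simp add: max_mult_distrib_left)
  then show ?thesis unfolding Nn_def Q_hom using eps
    by (simp add: max_mult_distrib_left mult.left_commute)
qed

lemma Nn_tri: "Nn \<epsilon> (v + w) \<le> Nn \<epsilon> v + Nn \<epsilon> w"
proof -
  have 1: "Q (v + w) \<le> Nn \<epsilon> v + Nn \<epsilon> w" using Q_add[of v w] unfolding Nn_def by linarith
  have "norm (fst (v + w)) \<le> norm (fst v) + norm (fst w)" by (simp add: norm_triangle_ineq)
  then have a: "\<epsilon> * norm (fst (v + w)) \<le> \<epsilon> * norm (fst v) + \<epsilon> * norm (fst w)"
    using eps by (simp add: distrib_left[symmetric] mult_left_mono)
  have "norm (snd (v + w)) \<le> norm (snd v) + norm (snd w)" by (simp add: norm_triangle_ineq)
  then have b: "\<epsilon> * norm (snd (v + w)) \<le> \<epsilon> * norm (snd v) + \<epsilon> * norm (snd w)"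
    using eps by (simp add: distrib_left[symmetric] mult_left_mono)
  have 2: "\<epsilon> * max (norm (fst (v + w))) (norm (snd (v + w))) \<le> Nn \<epsilon> v + Nn \<epsilon> w"
    using a b Nn_lower[of v] Nn_lower[of w] eps by (simp add: max_mult_distrib_left)
  show ?thesis using 1 2 unfolding Nn_def[of _ "v + w"] by simp
qed

lemma Nn_compl:
  fixes s :: "nat \<Rightarrow> 'a \<times> 'b"
  assumes C: "\<forall>e>0. \<exists>M. \<forall>m\<ge>M. \<forall>n\<ge>M. Nn \<epsilon> (s m - s n) < e"
  shows "\<exists>l. (\<lambda>n. Nn \<epsilon> (s n - l)) \<longlonglongrightarrow> 0"
proof -
  have c1: "Cauchy (\<lambda>n. fst (s n))" unfolding Cauchy_def
  proof (intro allI impI)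
    fix e :: real assume e: "e > 0"
    then obtain M where M: "\<forall>m\<ge>M. \<forall>n\<ge>M. Nn \<epsilon> (s m - s n) < \<epsilon> * e" using C eps by (meson mult_pos_pos)
    show "\<exists>M. \<forall>m\<ge>M. \<forall>n\<ge>M. dist (fst (s m)) (fst (s n)) < e"
    proof (intro exI allI impI)
      fix m n assume "m \<ge> M" "n \<ge> M"
      then have "\<epsilon> * norm (fst (s m - s n)) < \<epsilon> * e" using M Nn_lower(1)[of "s m - s n"] by fastforce
      then show "dist (fst (s m)) (fst (s n)) < e" using eps by (simp add: dist_norm)
    qed
  qed
  have c2: "Cauchy (\<lambda>n. snd (s n))" unfolding Cauchy_def
  proof (intro allI impI)
    fix e :: real assume e: "e > 0"
    then obtain M where M: "\<forall>m\<ge>M. \<forall>n\<ge>M. Nn \<epsilon> (s m - s n) < \<epsilon> * e" using C eps by (meson mult_pos_pos)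
    show "\<exists>M. \<forall>m\<ge>M. \<forall>n\<ge>M. dist (snd (s m)) (snd (s n)) < e"
    proof (intro exI allI impI)
      fix m n assume "m \<ge> M" "n \<ge> M"
      then have "\<epsilon> * norm (snd (s m - s n)) < \<epsilon> * e" using M Nn_lower(2)[of "s m - s n"] by fastforce
      then show "dist (snd (s m)) (snd (s n)) < e" using eps by (simp add: dist_norm)
    qed
  qed
  obtain lx where lx: "(\<lambda>n. fst (s n)) \<longlonglongrightarrow> lx" using Cauchy_convergent[OF c1] convergent_def by blast
  obtain ly where ly: "(\<lambda>n. snd (s n)) \<longlonglongrightarrow> ly" using Cauchy_convergent[OF c2] convergent_def by blast
  have h: "(\<lambda>n. norm (fst (s n) - lx) + norm (snd (s n) - ly)) \<longlonglongrightarrow> 0"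
    using tendsto_add_zero[OF tendsto_norm_zero[OF LIM_zero[OF lx]] tendsto_norm_zero[OF LIM_zero[OF ly]]] .
  have "(\<lambda>n. Nn \<epsilon> (s n - (lx, ly))) \<longlonglongrightarrow> 0"
  proof (rule tendsto_sandwich[OF _ _ tendsto_const h])
    show "\<forall>\<^sub>F n in sequentially. 0 \<le> Nn \<epsilon> (s n - (lx, ly))" by (simp add: Nn_nonneg)
    show "\<forall>\<^sub>F n in sequentially. Nn \<epsilon> (s n - (lx, ly)) \<le> norm (fst (s n) - lx) + norm (snd (s n) - ly)"
      by (intro always_eventually allI, rule order.trans[OF Nn_upper]) simp
  qed
  then show ?thesis by blast
qed

lemma Nn_fst: "Nn \<epsilon> (x, 0) = norm x"
  unfolding Nn_def Q_fst using eps by (simp add: mult_left_le_one_le)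

lemma Nn_snd: "Nn \<epsilon> (0, y) = norm y"
  unfolding Nn_def Q_snd using eps by (simp add: mult_left_le_one_le)

lemma Nn_pair: "norm x \<le> 1 \<Longrightarrow> norm y \<le> 1 \<Longrightarrow> Nn \<epsilon> (x, - y) \<le> dist (f x) (g y) + \<epsilon>"
proof -
  assume x: "norm x \<le> 1" and y: "norm y \<le> 1"
  have "Q (x, - y) \<le> pz (Fv (x, - y))" unfolding Q_def by (rule qz_le_pz)
  also have "Fv (x, - y) = f x - g y" unfolding Fv_def by (simp add: linear_neg[OF lin_g])
  also have "pz (f x - g y) = dist (f x) (g y)" by (rule pz_diff)
  finally have 1: "Q (x, - y) \<le> dist (f x) (g y)" .
  have 2: "\<epsilon> * max (norm x) (norm y) \<le> \<epsilon>" using mult_left_mono[of "max (norm x) (norm y)" 1 \<epsilon>] x y eps by simp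
  have 3: "0 \<le> dist (f x) (g y)" by simp
  show ?thesis unfolding Nn_def max.bounded_iff fst_conv snd_conv norm_minus_cancel
    using 1 2 3 eps by (intro conjI) linarith+
qed

end

end



lemma hd_nonneg:
  assumes A: "A \<noteq> {}" and B: "B \<noteq> {}" and h: "\<forall>a\<in>A. \<forall>b\<in>B. 0 \<le> d a b \<and> d a b \<le> K"
  shows "0 \<le> hausdorff_dist d A B"
proof -
  have i0: "0 \<le> (INF b\<in>B. d a b)" if "a \<in> A" for a
    using B h that by (intro cINF_greatest) auto
  have iK: "(INF b\<in>B. d a b) \<le> K" if "a \<in> A" for a
  proof -
    obtain b where b: "b \<in> B" using B by blast
    have "(INF b\<in>B. d a b) \<le> d a b" using b h that by (intro cINF_lower) (auto intro!: bdd_belowI[where m=0])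
    then show ?thesis using h b that by fastforce
  qed
  obtain a where a: "a \<in> A" using A by blast
  have "0 \<le> (INF b\<in>B. d a b)" using i0 a .
  also have "\<dots> \<le> (SUP a\<in>A. INF b\<in>B. d a b)"
    using a iK by (intro cSUP_upper) (auto intro!: bdd_aboveI[where M=K])
  finally show ?thesis unfolding hausdorff_dist_def by simp
qed

lemma hd_le:
  fixes U :: "'i \<Rightarrow> 'w" and V :: "'j \<Rightarrow> 'w" and F :: "'i \<Rightarrow> 'u" and G :: "'j \<Rightarrow> 'u"
  assumes I: "I \<noteq> {}" and J: "J \<noteq> {}"
    and h1: "\<forall>i\<in>I. \<forall>j\<in>J. 0 \<le> d1 (U i) (V j)"
    and h2: "\<forall>i\<in>I. \<forall>j\<in>J. 0 \<le> d2 (F i) (G j) \<and> d2 (F i) (G j) \<le> K"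
    and h3: "\<forall>i\<in>I. \<forall>j\<in>J. d1 (U i) (V j) \<le> d2 (F i) (G j) + e"
  shows "hausdorff_dist d1 (U ` I) (V ` J) \<le> hausdorff_dist d2 (F ` I) (G ` J) + e"
proof -
  define a1 where "a1 i = (INF j\<in>J. d1 (U i) (V j))" for i
  define a2 where "a2 i = (INF j\<in>J. d2 (F i) (G j))" for i
  define b1 where "b1 j = (INF i\<in>I. d1 (U i) (V j))" for j
  define b2 where "b2 j = (INF i\<in>I. d2 (F i) (G j))" for j
  have a12: "a1 i \<le> a2 i + e" if i: "i \<in> I" for i
  proof -
    have "a1 i - e \<le> a2 i" unfolding a2_def
    proof (rule cINF_greatest[OF J])
      fix j assume j: "j \<in> J"
      have "a1 i \<le> d1 (U i) (V j)" unfolding a1_def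
        using j i h1 by (intro cINF_lower) (auto intro!: bdd_belowI[where m=0])
      then show "a1 i - e \<le> d2 (F i) (G j)" using h3 i j by fastforce
    qed
    then show ?thesis by simp
  qed
  have a2K: "a2 i \<le> K" if i: "i \<in> I" for i
  proof -
    obtain j where j: "j \<in> J" using J by blast
    have "a2 i \<le> d2 (F i) (G j)" unfolding a2_def
      using j i h2 by (intro cINF_lower) (auto intro!: bdd_belowI[where m=0])
    then show ?thesis using h2 i j by fastforce
  qed
  have b12: "b1 j \<le> b2 j + e" if j: "j \<in> J" for j
  proof -
    have "b1 j - e \<le> b2 j" unfolding b2_def
    proof (rule cINF_greatest[OF I])
      fix i assume i: "i \<in> I"
      have "b1 j \<le> d1 (U i) (V j)" unfolding b1_def
        using j i h1 by (intro cINF_lower) (auto intro!: bdd_belowI[where m=0])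
      then show "b1 j - e \<le> d2 (F i) (G j)" using h3 i j by fastforce
    qed
    then show ?thesis by simp
  qed
  have b2K: "b2 j \<le> K" if j: "j \<in> J" for j
  proof -
    obtain i where i: "i \<in> I" using I by blast
    have "b2 j \<le> d2 (F i) (G j)" unfolding b2_def
      using j i h2 by (intro cINF_lower) (auto intro!: bdd_belowI[where m=0])
    then show ?thesis using h2 i j by fastforce
  qed
  have sa: "(SUP i\<in>I. a1 i) \<le> (SUP i\<in>I. a2 i) + e"
  proof (rule cSUP_least[OF I])
    fix i assume i: "i \<in> I"
    have "a2 i \<le> (SUP i\<in>I. a2 i)" using i a2K by (intro cSUP_upper) (auto intro!: bdd_aboveI[where M=K])
    then show "a1 i \<le> (SUP i\<in>I. a2 i) + e" using a12[OF i] by simp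
  qed
  have sb: "(SUP j\<in>J. b1 j) \<le> (SUP j\<in>J. b2 j) + e"
  proof (rule cSUP_least[OF J])
    fix j assume j: "j \<in> J"
    have "b2 j \<le> (SUP j\<in>J. b2 j)" using j b2K by (intro cSUP_upper) (auto intro!: bdd_aboveI[where M=K])
    then show "b1 j \<le> (SUP j\<in>J. b2 j) + e" using b12[OF j] by simp
  qed
  have e1: "hausdorff_dist d1 (U ` I) (V ` J) = max (SUP i\<in>I. a1 i) (SUP j\<in>J. b1 j)"
    unfolding hausdorff_dist_def a1_def b1_def by (simp add: image_image)
  have e2: "hausdorff_dist d2 (F ` I) (G ` J) = max (SUP i\<in>I. a2 i) (SUP j\<in>J. b2 j)"
    unfolding hausdorff_dist_def a2_def b2_def by (simp add: image_image)
  show ?thesis unfolding e1 e2 using sa sb by linarith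
qed

lemma member_nonneg:
  assumes B: "banach_on S N" and U: "range U \<subseteq> S" and V: "range V \<subseteq> S"
    and nU: "\<forall>x. N (U x) = norm (x::'a::real_normed_vector)" and nV: "\<forall>y. N (V y) = norm (y::'b::real_normed_vector)"
  shows "0 \<le> hausdorff_dist (\<lambda>u v. N (u - v)) (U ` cball 0 1) (V ` cball 0 1)"
proof (rule hd_nonneg[where K=2])
  show "U ` cball 0 1 \<noteq> {}" "V ` cball 0 1 \<noteq> {}" by auto
  note B' = B[unfolded banach_on_def]
  have sub: "subspace S" using B' by (rule conjunct1)
  have nn: "\<forall>x\<in>S. 0 \<le> N x" using B' by (rule conjunct1[OF conjunct2])
  have hom: "\<forall>c. \<forall>x\<in>S. N (c *\<^sub>R x) = \<bar>c\<bar> * N x" using B' by (rule conjunct1[OF conjunct2[OF conjunct2[OF conjunct2]]])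
  have tri: "\<forall>x\<in>S. \<forall>y\<in>S. N (x + y) \<le> N x + N y" using B' by (rule conjunct1[OF conjunct2[OF conjunct2[OF conjunct2[OF conjunct2]]]])
  show "\<forall>a\<in>U ` cball 0 1. \<forall>b\<in>V ` cball 0 1. 0 \<le> N (a - b) \<and> N (a - b) \<le> 2"
  proof (intro ballI)
    fix a b assume "a \<in> U ` cball 0 1" "b \<in> V ` cball 0 1"
    then obtain x y where a: "a = U x" "norm x \<le> 1" and b: "b = V y" "norm y \<le> 1" by auto
    have aS: "a \<in> S" and bS: "b \<in> S" using a b U V by auto
    have mb: "(-1) *\<^sub>R b \<in> S" by (rule real_vector.subspace_scale[OF sub bS])
    have dS: "a - b \<in> S" by (rule real_vector.subspace_diff[OF sub aS bS])
    have "N (a - b) = N (a + (-1) *\<^sub>R b)" by simp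
    also have "\<dots> \<le> N a + N ((-1) *\<^sub>R b)" using tri aS mb by blast
    also have "N ((-1) *\<^sub>R b) = N b" using hom bS by (metis abs_minus_cancel abs_one mult_1)
    finally have "N (a - b) \<le> N a + N b" .
    also have "N a + N b = norm x + norm y" using a b nU nV by simp
    finally have 1: "N (a - b) \<le> norm x + norm y" .
    have 2: "0 \<le> N (a - b)" using nn dS by blast
    show "0 \<le> N (a - b) \<and> N (a - b) \<le> 2" using 1 2 a(2) b(2) by linarith
  qed
qed


definition kset :: "'a::banach itself \<Rightarrow> 'b::banach itself \<Rightarrow> real set" where
  "kset _ _ = {hausdorff_dist (\<lambda>u v. N (u - v)) (U ` cball 0 1) (V ` cball 0 1) |
      (S :: ((nat \<Rightarrow> 'a \<times> 'b) \<Rightarrow> real) set) N (U :: 'a \<Rightarrow> ((nat \<Rightarrow> 'a \<times> 'b) \<Rightarrow> real))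
      (V :: 'b \<Rightarrow> ((nat \<Rightarrow> 'a \<times> 'b) \<Rightarrow> real)).
      banach_on S N \<and> linear U \<and> linear V \<and> range U \<subseteq> S \<and> range V \<subseteq> S \<and>
      (\<forall>x. N (U x) = norm x) \<and> (\<forall>y. N (V y) = norm y)}"

lemma kadets_kset: "kadets_dist TYPE('a::banach) TYPE('b::banach) = Inf (kset TYPE('a) TYPE('b))"
  unfolding kadets_dist_def kset_def ..

lemma kset_bdd: "bdd_below (kset TYPE('a::banach) TYPE('b::banach))"
  unfolding kset_def by (auto intro!: bdd_belowI[where m=0] member_nonneg)

theorem theorem2p5:
  fixes f :: "'a::banach \<Rightarrow> 'z::{real_vector, metric_space}"
    and g :: "'b::banach \<Rightarrow> 'z"
  assumes transl_inv: "\<forall>x y z::'z. dist (x + z) (y + z) = dist x y"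
    and add_cont: "continuous_on UNIV (\<lambda>p::'z \<times> 'z. fst p + snd p)"
    and scale_cont: "continuous_on UNIV (\<lambda>p::real \<times> 'z. fst p *\<^sub>R snd p)"
    and lin_f: "linear f" and lin_g: "linear g"
    and iso_f: "\<forall>x1 x2. dist (f x1) (f x2) = norm (x1 - x2)"
    and iso_g: "\<forall>y1 y2. dist (g y1) (g y2) = norm (y1 - y2)"
  shows "kadets_dist TYPE('a) TYPE('b) \<le> hausdorff_dist dist (f ` cball 0 1) (g ` cball 0 1)"
proof -
  interpret setting f g
    using transl_inv lin_f lin_g iso_f iso_g by (simp add: setting_def setting_axioms_def TI_def)
  obtain E :: "'a \<times> 'b \<Rightarrow> ((nat \<Rightarrow> 'a \<times> 'b) \<Rightarrow> real)" where linE: "linear E" and injE: "inj E"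
    using exists_embed by blast
  have iv: "\<And>v. inv E (E v) = v" using injE by simp
  define H where "H = hausdorff_dist dist (f ` cball 0 1) (g ` cball 0 1)"
  have "Inf (kset TYPE('a) TYPE('b)) \<le> H"
  proof (rule field_le_epsilon)
    fix e :: real assume e: "0 < e"
    define \<epsilon> where "\<epsilon> = min e 1"
    have e1: "0 < \<epsilon>" and e2: "\<epsilon> \<le> 1" and e3: "\<epsilon> \<le> e" using e unfolding \<epsilon>_def by auto
    define N where "N w = Nn \<epsilon> (inv E w)" for w
    define U where "U x = E (x, 0)" for x
    define V where "V y = E (0, y)" for y
    have ban: "banach_on (range E) N" unfolding N_def
      by (rule banach_transfer[OF linE injE Nn_nonneg[OF e1 e2] Nn_zero_iff[OF e1 e2]
            Nn_hom[OF e1 e2] Nn_tri[OF e1 e2] Nn_compl[OF e1 e2]])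
    have linU: "linear U"
    proof (rule linearI)
      fix x x' :: 'a
      have p: "(x + x', 0::'b) = (x, 0) + (x', 0)" by simp
      show "U (x + x') = U x + U x'" unfolding U_def p by (rule linear_add[OF linE])
    next
      fix c and x :: 'a
      have p: "(c *\<^sub>R x, 0::'b) = c *\<^sub>R (x, 0)" by simp
      show "U (c *\<^sub>R x) = c *\<^sub>R U x" unfolding U_def p by (rule linear_scale[OF linE])
    qed
    have linV: "linear V"
    proof (rule linearI)
      fix y y' :: 'b
      have p: "(0::'a, y + y') = (0, y) + (0, y')" by simp
      show "V (y + y') = V y + V y'" unfolding V_def p by (rule linear_add[OF linE])
    next
      fix c and y :: 'b
      have p: "(0::'a, c *\<^sub>R y) = c *\<^sub>R (0, y)" by simp
      show "V (c *\<^sub>R y) = c *\<^sub>R V y" unfolding V_def p by (rule linear_scale[OF linE])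
    qed
    have nU: "\<forall>x. N (U x) = norm x" unfolding N_def U_def iv using Nn_fst[OF e1 e2] by simp
    have nV: "\<forall>y. N (V y) = norm y" unfolding N_def V_def iv using Nn_snd[OF e1 e2] by simp
    have rU: "range U \<subseteq> range E" and rV: "range V \<subseteq> range E" unfolding U_def V_def by auto
    define m where "m = hausdorff_dist (\<lambda>u v. N (u - v)) (U ` cball 0 1) (V ` cball 0 1)"
    have mem: "m \<in> kset TYPE('a) TYPE('b)"
      unfolding kset_def m_def using ban linU linV rU rV nU nV by blast
    have UV: "N (U x - V y) = Nn \<epsilon> (x, - y)" for x y
    proof -
      have "U x - V y = E ((x, 0) - (0, y))" unfolding U_def V_def by (rule linear_diff[OF linE, symmetric])
      then show ?thesis unfolding N_def by (simp add: iv)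
    qed
    have "m \<le> H + \<epsilon>" unfolding m_def H_def
    proof (rule hd_le[where K=2])
      show "cball (0::'a) 1 \<noteq> {}" "cball (0::'b) 1 \<noteq> {}" by auto
      show "\<forall>i\<in>cball 0 1. \<forall>j\<in>cball 0 1. 0 \<le> N (U i - V j)"
        using Nn_nonneg[OF e1 e2] by (simp add: UV)
      show "\<forall>i\<in>cball 0 1. \<forall>j\<in>cball 0 1. 0 \<le> dist (f i) (g j) \<and> dist (f i) (g j) \<le> 2"
      proof (intro ballI conjI)
        fix i j assume i: "i \<in> cball (0::'a) 1" and j: "j \<in> cball (0::'b) 1"
        show "0 \<le> dist (f i) (g j)" by simp
        have "dist (f i) (g j) \<le> dist (f i) 0 + dist 0 (g j)" by (rule dist_triangle)
        also have "dist (f i) 0 = norm i" using pzf[of i] by (simp add: pz_def)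
        also have "dist 0 (g j) = norm j" using pzg[of j] by (simp add: pz_def dist_commute)
        finally show "dist (f i) (g j) \<le> 2" using i j by simp
      qed
      show "\<forall>i\<in>cball 0 1. \<forall>j\<in>cball 0 1. N (U i - V j) \<le> dist (f i) (g j) + \<epsilon>"
        using Nn_pair[OF e1 e2] by (simp add: UV)
    qed
    have "Inf (kset TYPE('a) TYPE('b)) \<le> m" by (rule cInf_lower[OF mem kset_bdd])
    then show "Inf (kset TYPE('a) TYPE('b)) \<le> H + e" using \<open>m \<le> H + \<epsilon>\<close> e3 by linarith
  qed
  then show ?thesis unfolding kadets_kset H_def .
qed

end
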